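(* For integers $n\ge 1$ and $t\ge 1$ let $c_n(-2,t)=(-1)^{n+t}\frac{2n}{n+t}\binom{n+t}{2t}$ (an integer). Then: (1) if $s\geq 1$, $J\geq 1$, and $n\geq 0$ is even, then $c_n(-2,2^sJ-1)\equiv 0\pmod{2^{s+1}}$; (2) if $J\geq 0$ and $n\not\equiv 13,14\pmod{27}$, then $c_n(-2,27J+13)\equiv 0\pmod 3$; (3) if $J\geq 1$ and $n\not\equiv \pm1\pmod{27}$, then $c_n(-2,27J-1)\equiv 0\pmod 3$.
   Context: In (1), for $n=0$ the formula gives $c_0(-2,t)=0$. Binomial coefficients $\binom{m}{k}$ with $k>m$ are $0$. *)

theory Defs
  imports Complex_Main
begin

text \<open>Integrality is not assumed;
  congruences are stated as "equals an integer multiple of m".\<close>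
definition cm2 :: "nat \<Rightarrow> nat \<Rightarrow> real" where
  "cm2 n t = (-1) ^ (n + t) * (2 * real n / real (n + t)) * real ((n + t) choose (2 * t))"

end

theory Submission
  imports Defs "HOL-Computational_Algebra.Primes"
begin

definition Y :: "nat \<Rightarrow> nat \<Rightarrow> nat" where
  "Y n t = ((n + t) choose (2 * t)) + ((n + t - 1) choose (2 * t))"

lemma Y_mult:
  assumes "t \<ge> 1"
  shows "Y n t * (n + t) = 2 * n * ((n + t) choose (2 * t))"
proof -
  define m where "m = n + t"
  have m0: "m > 0" using assms m_def by simp
  have A: "(m - 2*t) * (m choose (2*t)) = m * ((m - 1) choose (2*t))"
    by (rule binomial_absorb_comp)
  show ?thesis
  proof (cases "2*t \<le> m")
    case True
    have "Y n t * m = m * (m choose (2*t)) + m * ((m - 1) choose (2*t))"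
      unfolding Y_def m_def by (simp add: algebra_simps)
    also have "\<dots> = m * (m choose (2*t)) + (m - 2*t) * (m choose (2*t))"
      using A by simp
    also have "\<dots> = 2 * n * (m choose (2*t))"
      using True m_def by (simp add: algebra_simps)
    finally show ?thesis unfolding m_def .
  next
    case False
    then have c1: "(n + t) choose (2*t) = 0" "(n + t - 1) choose (2*t) = 0" unfolding m_def by auto
    show ?thesis unfolding Y_def c1 by simp
  qed
qed

lemma cm2_Y:
  assumes "t \<ge> 1"
  shows "cm2 n t = (-1) ^ (n + t) * real (Y n t)"
proof -
  have "real (Y n t) * real (n + t) = 2 * real n * real ((n + t) choose (2 * t))"
    using Y_mult[OF assms, of n] by (metis of_nat_mult of_nat_numeral)
  then have "real (Y n t) = 2 * real n / real (n + t) * real ((n + t) choose (2 * t))"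
    using assms by (simp add: field_simps)
  then show ?thesis unfolding cm2_def by simp
qed

lemma two_step:
  "(m + 2) * ((m + 1) * (m choose k)) = (k + 2) * (k + 1) * ((m + 2) choose (k + 2))"
proof -
  have "Suc m * (m choose k) = (Suc m choose Suc k) * Suc k" by (rule Suc_times_binomial_eq)
  moreover have "Suc (Suc m) * (Suc m choose Suc k) = (Suc (Suc m) choose Suc (Suc k)) * Suc (Suc k)"
    by (rule Suc_times_binomial_eq)
  ultimately show ?thesis by (simp add: algebra_simps)
qed

lemma one_step:
  "(m + 1) * (m choose k) = (k + 1) * ((m + 1) choose (k + 1))"
  using Suc_times_binomial_eq[of m k] by simp

lemma real_of_Y:
  assumes "t \<ge> 1" "d dvd Y n t"
  shows "\<exists>k::int. cm2 n t = of_int (int d * k)"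
proof -
  obtain e where e: "Y n t = d * e" using assms(2) by blast
  show ?thesis
    by (rule exI[of _ "(-1) ^ (n + t) * int e"]) (simp add: cm2_Y[OF assms(1)] e)
qed

lemma part1:
  assumes s: "s \<ge> 1" and J: "J \<ge> 1" and n: "even n"
  shows "(2::nat) ^ (s + 1) dvd Y n (2 ^ s * J - 1)"
proof -
  define q :: nat where "q = 2 ^ s"
  define t where "t = q * J - 1"
  define m where "m = n + t"
  have q2: "q \<ge> 2" unfolding q_def using s
    by (metis one_less_numeral_iff power_increasing_iff power_one_right semiring_norm(76) le_neq_implies_less less_imp_le_nat one_le_numeral power_one_right)
  have qJ: "q * J \<ge> 2" using q2 J by (metis mult_le_mono nat_mult_1_right)
  have t1: "t \<ge> 1" using qJ t_def by simp
  have evq: "even q" unfolding q_def using s by simp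
  have "even (q * J)" using evq by simp
  then have "odd (q * J - 1)" using qJ q2 J by simp
  then have oddm: "odd m" unfolding m_def t_def using n by simp
  have key: "(m + 2) * ((m + 1) * (m choose (2*t))) = (2*t + 2) * (2*t + 1) * ((m + 2) choose (2*t + 2))"
    by (rule two_step)
  have "2*t + 2 = 2 * q * J" unfolding t_def using qJ by simp
  then have "2 ^ (s+1) dvd (2*t + 2)" unfolding q_def by simp
  then have "2 ^ (s+1) dvd (m + 2) * ((m + 1) * (m choose (2*t)))"
    using key by (metis dvd_mult2)
  moreover have "coprime ((2::nat) ^ (s+1)) (m + 2)" using oddm by simp
  ultimately have d1: "2 ^ (s+1) dvd (m + 1) * (m choose (2*t))"
    using coprime_dvd_mult_right_iff by blast
  have m1: "m + 1 = n + q * J" unfolding m_def t_def using qJ by simp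
  have "2 ^ s dvd (m + 1) * (m choose (2*t))" using d1
    by (meson dvd_trans le_add1 power_le_dvd dvd_refl)
  moreover have "2 ^ s dvd q * J * (m choose (2*t))" unfolding q_def by simp
  ultimately have "2 ^ s dvd n * (m choose (2*t))"
    unfolding m1 by (metis add_mult_distrib dvd_add_left_iff)
  then have "2 ^ (s+1) dvd 2 * n * (m choose (2*t))" by (simp add: mult.assoc)
  then have "2 ^ (s+1) dvd Y n t * m" using Y_mult[OF t1, of n] m_def by simp
  moreover have "coprime ((2::nat) ^ (s+1)) m" using oddm by simp
  ultimately show ?thesis unfolding t_def q_def
    using coprime_dvd_mult_left_iff by blast
qed

lemma three_dvd:
  assumes "(27::nat) dvd a * c" "\<not> 27 dvd a"
  shows "3 dvd c"
proof (rule ccontr)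
  assume "\<not> 3 dvd c"
  then have "coprime (3::nat) c" by (intro prime_imp_coprime) auto
  then have "coprime ((3::nat) ^ 3) c" using coprime_power_left_iff by blast
  moreover have "(3::nat) ^ 3 = 27" by simp
  ultimately have "coprime (27::nat) c" by metis
  then have "27 dvd a" using assms(1) coprime_dvd_mult_left_iff by blast
  with assms(2) show False by simp
qed

lemma mod27_lemma:
  assumes "(27::nat) dvd (x + 1) * (x + 2)"
  shows "27 dvd x + 1 \<or> 27 dvd x + 2"
proof (rule ccontr)
  assume "\<not> (27 dvd x + 1 \<or> 27 dvd x + 2)"
  then have F1: "\<not> 27 dvd x + 1" and F2: "\<not> 27 dvd x + 2" by auto
  have a: "3 dvd x + 2" using three_dvd[OF assms F1] .
  have b: "3 dvd x + 1" using three_dvd[of "x+2" "x+1"] assms F2 by (simp add: mult.commute)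
  have "3 dvd (x + 2) - (x + 1)" using dvd_diff_nat[OF a b] .
  then show False by simp
qed

lemma no27:
  assumes "(27::nat) dvd 27 * b + v" "0 < v" "v < 54" "v \<noteq> 27"
  shows False
proof -
  have "27 dvd v" using assms(1) by (simp add: dvd_add_right_iff)
  then obtain k where k: "v = 27 * k" by blast
  show False
  proof (cases "k \<le> 1")
    case True
    then have "k = 0 \<or> k = 1" by auto
    then show False using k assms by auto
  next
    case False
    then have "k \<ge> 2" by simp
    then have "27 * k \<ge> 54" by simp
    then show False using k assms by simp
  qed
qed

lemma dvd27_from_eq:
  assumes "a = b * B" "b = 27 * c"
  shows "(27::nat) dvd a"
  using assms by simp

lemma part2:
  assumes n13: "n mod 27 \<noteq> 13" and n14: "n mod 27 \<noteq> 14"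
  shows "3 dvd Y n (27 * J + 13)"
proof -
  define t where "t = 27 * J + 13"
  define m where "m = n + t"
  define r where "r = n mod 27"
  define a where "a = n div 27"
  have r27: "r < 27" unfolding r_def by simp
  have nar: "n = 27 * a + r" unfolding a_def r_def by simp
  have mr: "m = 27 * (a + J) + (r + 13)" unfolding m_def t_def nar by simp
  have m1: "m \<ge> 1" unfolding m_def t_def by simp
  have tt: "2*t + 1 = 27 * (2*J + 1)" unfolding t_def by simp
  have "27 dvd (m + 1) * (m choose (2*t))" by (rule dvd27_from_eq[OF one_step tt])
  moreover have "\<not> 27 dvd (m + 1)"
  proof
    assume h: "27 dvd m + 1"
    have e: "m + 1 = 27 * (a + J) + (r + 14)" using m1 unfolding mr by simp
    have "27 dvd 27 * (a + J) + (r + 14)" using h unfolding e .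
    then show False by (rule no27) (use r27 n13 r_def in auto)
  qed
  ultimately have d1: "3 dvd (m choose (2*t))" by (rule three_dvd)
  have "27 dvd (m - 1 + 1) * ((m - 1) choose (2*t))" by (rule dvd27_from_eq[OF one_step tt])
  moreover have "\<not> 27 dvd (m - 1 + 1)"
  proof
    assume h: "27 dvd m - 1 + 1"
    have e: "m - 1 + 1 = 27 * (a + J) + (r + 13)" using m1 unfolding mr by simp
    have "27 dvd 27 * (a + J) + (r + 13)" using h unfolding e .
    then show False by (rule no27) (use r27 n14 r_def in auto)
  qed
  ultimately have d2: "3 dvd ((m - 1) choose (2*t))" by (rule three_dvd)
  show ?thesis using d1 d2 unfolding Y_def t_def[symmetric] m_def[symmetric] by simp
qed

lemma part3:
  assumes J: "J \<ge> 1" and n1: "n mod 27 \<noteq> 1" and n26: "n mod 27 \<noteq> 26"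
  shows "3 dvd Y n (27 * J - 1)"
proof -
  define t where "t = 27 * J - 1"
  define m where "m = n + t"
  define r where "r = n mod 27"
  define a where "a = n div 27"
  define b where "b = a + J - 1"
  have r27: "r < 27" unfolding r_def by simp
  have nar: "n = 27 * a + r" unfolding a_def r_def by simp
  have t1: "t \<ge> 1" unfolding t_def using J by simp
  have m1: "m \<ge> 1" unfolding m_def using t1 by simp
  have mr: "m = 27 * b + (r + 26)" unfolding m_def t_def nar b_def using J by simp
  have t2: "2*t + 2 = 27 * (2*J)" unfolding t_def using J by simp
  have tt: "(2*t + 2) * (2*t + 1) = 27 * (2*J * (2*t + 1))" unfolding t2 by (simp only: mult.assoc)
  show ?thesis
  proof (cases "r = 0")
    case True
    then have "3 dvd n" using nar by simp
    then have "3 dvd Y n t * m" using Y_mult[OF t1, of n] m_def by simp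
    moreover have "\<not> 3 dvd m"
    proof
      assume h: "3 dvd m"
      have e: "m = 3 * (9 * b + 8) + 2" unfolding mr True by simp
      have "3 dvd 3 * (9 * b + 8) + 2" using h unfolding e .
      then have "3 dvd (2::nat)" using dvd_add_right_iff dvd_triv_left by blast
      then show False by simp
    qed
    moreover have "prime (3::nat)" by simp
    ultimately show ?thesis unfolding t_def
      using prime_dvd_mult_iff by blast
  next
    case False
    have r2: "r \<ge> 2" using False n1 r_def by auto
    have r25: "r \<le> 25" using r27 n26 r_def by auto
    have "27 dvd (m + 2) * ((m + 1) * (m choose (2*t)))"
      by (rule dvd27_from_eq[OF two_step tt])
    then have "27 dvd ((m + 1) * (m + 2)) * (m choose (2*t))"
      by (metis mult.assoc mult.commute)
    moreover have "\<not> 27 dvd (m + 1) * (m + 2)"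
    proof
      assume "27 dvd (m + 1) * (m + 2)"
      then have "27 dvd m + 1 \<or> 27 dvd m + 2" by (rule mod27_lemma)
      then show False
      proof
        assume h: "27 dvd m + 1"
        have e: "m + 1 = 27 * b + (r + 27)" using m1 unfolding mr by simp
        have "27 dvd 27 * b + (r + 27)" using h unfolding e .
        then show False by (rule no27) (use r2 r25 in auto)
      next
        assume h: "27 dvd m + 2"
        have e: "m + 2 = 27 * b + (r + 28)" using m1 unfolding mr by simp
        have "27 dvd 27 * b + (r + 28)" using h unfolding e .
        then show False by (rule no27) (use r2 r25 in auto)
      qed
    qed
    ultimately have d1: "3 dvd (m choose (2*t))" by (rule three_dvd)
    have "27 dvd (m - 1 + 2) * ((m - 1 + 1) * ((m - 1) choose (2*t)))"
      by (rule dvd27_from_eq[OF two_step tt])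
    then have "27 dvd ((m - 1 + 1) * (m - 1 + 2)) * ((m - 1) choose (2*t))"
      by (metis mult.assoc mult.commute)
    moreover have "\<not> 27 dvd (m - 1 + 1) * (m - 1 + 2)"
    proof
      assume "27 dvd (m - 1 + 1) * (m - 1 + 2)"
      then have "27 dvd m - 1 + 1 \<or> 27 dvd m - 1 + 2" by (rule mod27_lemma)
      then show False
      proof
        assume h: "27 dvd m - 1 + 1"
        have e: "m - 1 + 1 = 27 * b + (r + 26)" using m1 unfolding mr by simp
        have "27 dvd 27 * b + (r + 26)" using h unfolding e .
        then show False by (rule no27) (use r2 r25 in auto)
      next
        assume h: "27 dvd m - 1 + 2"
        have e: "m - 1 + 2 = 27 * b + (r + 27)" using m1 unfolding mr by simp
        have "27 dvd 27 * b + (r + 27)" using h unfolding e .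
        then show False by (rule no27) (use r2 r25 in auto)
      qed
    qed
    ultimately have d2: "3 dvd ((m - 1) choose (2*t))" by (rule three_dvd)
    show ?thesis using d1 d2 unfolding Y_def t_def[symmetric] m_def[symmetric] by simp
  qed
qed

theorem mainTheorem9:
  shows "(\<forall>s J n :: nat. s \<ge> 1 \<longrightarrow> J \<ge> 1 \<longrightarrow> even n \<longrightarrow>
            (\<exists>k::int. cm2 n (2 ^ s * J - 1) = of_int (2 ^ (s + 1) * k)))
       \<and> (\<forall>J n :: nat. n mod 27 \<noteq> 13 \<longrightarrow> n mod 27 \<noteq> 14 \<longrightarrow>
            (\<exists>k::int. cm2 n (27 * J + 13) = of_int (3 * k)))
       \<and> (\<forall>J n :: nat. J \<ge> 1 \<longrightarrow> n mod 27 \<noteq> 1 \<longrightarrow> n mod 27 \<noteq> 26 \<longrightarrow>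
            (\<exists>k::int. cm2 n (27 * J - 1) = of_int (3 * k)))"
proof (intro conjI allI impI)
  fix s J n :: nat
  assume s: "s \<ge> 1" and J: "J \<ge> 1" and n: "even n"
  have q2: "(2::nat) ^ s \<ge> 2" using s
  proof -
    have "(2::nat) ^ 1 \<le> 2 ^ s" by (rule power_increasing[OF s]) simp
    then show ?thesis by simp
  qed
  have "2 ^ s * J \<ge> (2::nat) ^ s" using J by simp
  then have "2 ^ s * J - 1 \<ge> (1::nat)" using q2 by linarith
  from real_of_Y[OF this part1[OF s J n]]
  show "\<exists>k::int. cm2 n (2 ^ s * J - 1) = of_int (2 ^ (s + 1) * k)" by simp
next
  fix J n :: nat
  assume "n mod 27 \<noteq> 13" "n mod 27 \<noteq> 14"
  have "27 * J + 13 \<ge> (1::nat)" by simp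
  from real_of_Y[OF this part2[OF \<open>n mod 27 \<noteq> 13\<close> \<open>n mod 27 \<noteq> 14\<close>]]
  show "\<exists>k::int. cm2 n (27 * J + 13) = of_int (3 * k)" by simp
next
  fix J n :: nat
  assume J: "J \<ge> 1" and "n mod 27 \<noteq> 1" "n mod 27 \<noteq> 26"
  have "27 * J - 1 \<ge> 1" using J by simp
  from real_of_Y[OF this part3[OF J \<open>n mod 27 \<noteq> 1\<close> \<open>n mod 27 \<noteq> 26\<close>]]
  show "\<exists>k::int. cm2 n (27 * J - 1) = of_int (3 * k)" by simp
qed

end
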